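(* Let $\mathbb{F}\in\{\mathbb{R},\mathbb{C}\}$ and $M>N$. Suppose $\Phi=\{\varphi_i\}_{i=1}^M$ is a Parseval frame for $\mathbb{F}^N$ and $\Psi=\{\psi_i\}_{i=1}^M$ is a Naimark complement of $\Phi$ (a Parseval frame for $\mathbb{F}^{M-N}$). Let $K\subseteq[M]$ with $|K|=k\leq N$ and $K^c=[M]\setminus K$. If $k\le M-N$, then for $i=1,\dots,M-N$, $$\sigma_i(\Psi_{K^c})=\begin{cases}1 & \text{if } 1\leq i\leq M-N-k,\\ \sigma_j(\Phi_K) & \text{if } i=M-N-k+j,\ 1\le j\le k.\end{cases}$$ If $k>M-N$, then $\sigma_i(\Phi_K)=1$ for $i=1,\dots,k-(M-N)$, and $\sigma_i(\Psi_{K^c})=\sigma_{i+k-(M-N)}(\Phi_K)$ for $i=1,\dots,M-N$.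
   Context: A Parseval frame for $\mathbb{F}^N$ is a family $\{\varphi_i\}_{i=1}^M\subseteq\mathbb{F}^N$ whose $N\times M$ matrix $\Phi$ (columns $\varphi_i$) satisfies $\Phi\Phi^*=I$. A Naimark complement of $\Phi$ is any $\Psi=\{\psi_i\}_{i=1}^M\subseteq\mathbb{F}^{M-N}$ with $\Psi^*\Psi=I-\Phi^*\Phi$. For $K\subseteq[M]$, $\Phi_K$ is the submatrix of columns indexed by $K$. For a matrix $F$ of size $n\times m$, $\sigma_1(F)\ge\sigma_2(F)\ge\dots\ge\sigma_{\min\{n,m\}}(F)$ denote its singular values in decreasing order. *)

theory Defs
  imports "Jordan_Normal_Form.Schur_Decomposition" "Jordan_Normal_Form.DL_Submatrix"
    "Jordan_Normal_Form.Char_Poly" "HOL-Library.Multiset"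
begin

definition col_submat :: "'a mat \<Rightarrow> nat set \<Rightarrow> 'a mat" where
  "col_submat A K = submatrix A {0..<dim_row A} K"

definition singular_values :: "complex mat \<Rightarrow> real list" where
  "singular_values F =
     take (min (dim_row F) (dim_col F))
       (rev (sorted_list_of_multiset
          (image_mset (\<lambda>z. sqrt (Re z)) (proots (char_poly (mat_adjoint F * F))))))"

(* sigma F i = i-th largest singular value, 1-based (1 \<le> i \<le> min(n,m)). *)
definition sigma :: "complex mat \<Rightarrow> nat \<Rightarrow> real" where
  "sigma F i = singular_values F ! (i - 1)"

end

theory Submission
  imports Defs
begin

lemma adj_dims[simp]: "dim_row (mat_adjoint A) = dim_col A" "dim_col (mat_adjoint A) = dim_row A"
  unfolding mat_adjoint_def by auto

lemma adj_index[simp]: "i < dim_col A \<Longrightarrow> j < dim_row A \<Longrightarrow> mat_adjoint A $$ (i,j) = conjugate (A $$ (j,i))"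
  unfolding mat_adjoint_def by (auto simp: mat_of_rows_def)

lemma adj_carrier[simp]: "A \<in> carrier_mat n m \<Longrightarrow> mat_adjoint A \<in> carrier_mat m n"
  unfolding carrier_mat_def by auto


lemma cp_alt: fixes C :: "'a::comm_ring_1 mat"
  assumes C: "C \<in> carrier_mat k k"
  shows "char_poly C = det ([:0,1:] \<cdot>\<^sub>m 1\<^sub>m k - map_mat (\<lambda>a. [:a:]) C)"
proof -
  have "[:0,1:] \<cdot>\<^sub>m 1\<^sub>m (dim_row C) + map_mat (\<lambda>a. [:-a:]) C = [:0,1:] \<cdot>\<^sub>m 1\<^sub>m k - map_mat (\<lambda>a. [:a:]) C"
    by (rule eq_matI, insert C, auto)
  thus ?thesis unfolding char_poly_defs by simp
qed

lemma sylvester_cp: fixes A B :: "'a::idom mat"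
  assumes A: "A \<in> carrier_mat n m" and B: "B \<in> carrier_mat m n"
  shows "[:0,1:]^m * char_poly (A*B) = [:0,1:]^n * char_poly (B*A)"
proof -
  define X :: "'a poly" where "X = [:0,1:]"
  define Al where "Al = map_mat (\<lambda>a. [:a:]) A"
  define Bl where "Bl = map_mat (\<lambda>a. [:a:]) B"
  have Al: "Al \<in> carrier_mat n m" and Bl: "Bl \<in> carrier_mat m n" using A B by (auto simp: Al_def Bl_def)
  have AB: "map_mat (\<lambda>a. [:a:]) (A*B) = Al * Bl" unfolding Al_def Bl_def by (rule map_poly_mult[OF A B])
  have BA: "map_mat (\<lambda>a. [:a:]) (B*A) = Bl * Al" unfolding Al_def Bl_def by (rule map_poly_mult[OF B A])
  have cAB: "char_poly (A*B) = det (X \<cdot>\<^sub>m 1\<^sub>m n - Al * Bl)"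
    using cp_alt[of "A*B" n] A B AB by (auto simp: X_def)
  have cBA: "char_poly (B*A) = det (X \<cdot>\<^sub>m 1\<^sub>m m - Bl * Al)"
    using cp_alt[of "B*A" m] A B BA by (auto simp: X_def)
  define M1 where "M1 = four_block_mat (X \<cdot>\<^sub>m 1\<^sub>m n) Al Bl (1\<^sub>m m)"
  define L1 where "L1 = four_block_mat (1\<^sub>m n) (- Al) (0\<^sub>m m n) (1\<^sub>m m)"
  define L2 where "L2 = four_block_mat (1\<^sub>m n) (0\<^sub>m n m) (- Bl) (X \<cdot>\<^sub>m 1\<^sub>m m)"
  have M1: "M1 \<in> carrier_mat (n+m) (n+m)" unfolding M1_def by auto
  have L1: "L1 \<in> carrier_mat (n+m) (n+m)" unfolding L1_def by auto
  have L2: "L2 \<in> carrier_mat (n+m) (n+m)" unfolding L2_def by auto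
  have "L1 * M1 = four_block_mat (1\<^sub>m n * (X \<cdot>\<^sub>m 1\<^sub>m n) + (- Al) * Bl) (1\<^sub>m n * Al + (- Al) * 1\<^sub>m m)
      (0\<^sub>m m n * (X \<cdot>\<^sub>m 1\<^sub>m n) + 1\<^sub>m m * Bl) (0\<^sub>m m n * Al + 1\<^sub>m m * 1\<^sub>m m)"
    unfolding L1_def M1_def by (rule mult_four_block_mat, insert Al Bl, auto)
  also have "\<dots> = four_block_mat (X \<cdot>\<^sub>m 1\<^sub>m n - Al * Bl) (0\<^sub>m n m) Bl (1\<^sub>m m)"
  proof (rule cong_four_block_mat)
    show "1\<^sub>m n * (X \<cdot>\<^sub>m 1\<^sub>m n) + - Al * Bl = X \<cdot>\<^sub>m 1\<^sub>m n - Al * Bl"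
      using Al Bl by (subst minus_add_uminus_mat[of _ n n], auto)
    show "1\<^sub>m n * Al + - Al * 1\<^sub>m m = 0\<^sub>m n m" using Al by auto
    show "0\<^sub>m m n * (X \<cdot>\<^sub>m 1\<^sub>m n) + 1\<^sub>m m * Bl = Bl" using Bl by auto
    show "0\<^sub>m m n * Al + 1\<^sub>m m * 1\<^sub>m m = 1\<^sub>m m" using Al by auto
  qed
  finally have LM1: "L1 * M1 = four_block_mat (X \<cdot>\<^sub>m 1\<^sub>m n - Al * Bl) (0\<^sub>m n m) Bl (1\<^sub>m m)" .
  have "L2 * M1 = four_block_mat (1\<^sub>m n * (X \<cdot>\<^sub>m 1\<^sub>m n) + 0\<^sub>m n m * Bl) (1\<^sub>m n * Al + 0\<^sub>m n m * 1\<^sub>m m)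
      ((- Bl) * (X \<cdot>\<^sub>m 1\<^sub>m n) + (X \<cdot>\<^sub>m 1\<^sub>m m) * Bl) ((- Bl) * Al + (X \<cdot>\<^sub>m 1\<^sub>m m) * 1\<^sub>m m)"
    unfolding L2_def M1_def by (rule mult_four_block_mat, insert Al Bl, auto)
  also have "\<dots> = four_block_mat (X \<cdot>\<^sub>m 1\<^sub>m n) Al (0\<^sub>m m n) (X \<cdot>\<^sub>m 1\<^sub>m m - Bl * Al)"
  proof (rule cong_four_block_mat)
    show "1\<^sub>m n * (X \<cdot>\<^sub>m 1\<^sub>m n) + 0\<^sub>m n m * Bl = X \<cdot>\<^sub>m 1\<^sub>m n" using Bl by auto
    show "1\<^sub>m n * Al + 0\<^sub>m n m * 1\<^sub>m m = Al" using Al by auto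
    have "(- Bl) * (X \<cdot>\<^sub>m 1\<^sub>m n) = - (X \<cdot>\<^sub>m Bl)" using Bl mult_smult_distrib[OF Bl, of "1\<^sub>m n" n X] by simp
    moreover have "(X \<cdot>\<^sub>m 1\<^sub>m m) * Bl = X \<cdot>\<^sub>m Bl" using Bl by (simp add: mult_smult_assoc_mat[of _ m m])
    ultimately show "(- Bl) * (X \<cdot>\<^sub>m 1\<^sub>m n) + (X \<cdot>\<^sub>m 1\<^sub>m m) * Bl = 0\<^sub>m m n"
      using Bl by (simp add: uminus_l_inv_mat[of _ m n])
    show "(- Bl) * Al + (X \<cdot>\<^sub>m 1\<^sub>m m) * 1\<^sub>m m = X \<cdot>\<^sub>m 1\<^sub>m m - Bl * Al"
      using Al Bl by (subst minus_add_uminus_mat[of _ m m], auto simp: comm_add_mat[of _ m m])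
  qed
  finally have LM2: "L2 * M1 = four_block_mat (X \<cdot>\<^sub>m 1\<^sub>m n) Al (0\<^sub>m m n) (X \<cdot>\<^sub>m 1\<^sub>m m - Bl * Al)" .
  have dL1: "det L1 = 1" unfolding L1_def
    by (subst det_four_block_mat_lower_left_zero[of _ n _ m], insert Al, auto)
  have dL2: "det L2 = X ^ m" unfolding L2_def
    by (subst det_four_block_mat_upper_right_zero[of _ n _ m], insert Bl, auto)
  have dLM1: "det (L1 * M1) = det (X \<cdot>\<^sub>m 1\<^sub>m n - Al * Bl)" unfolding LM1
    by (subst det_four_block_mat_upper_right_zero[of _ n _ m], insert Al Bl, auto)
  have dLM2: "det (L2 * M1) = X ^ n * det (X \<cdot>\<^sub>m 1\<^sub>m m - Bl * Al)" unfolding LM2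
    by (subst det_four_block_mat_lower_left_zero[of _ n _ m], insert Al Bl, auto)
  have "det M1 = char_poly (A*B)" using dLM1 det_mult[OF L1 M1] dL1 cAB by simp
  moreover have "X^m * det M1 = X^n * char_poly (B*A)" using dLM2 det_mult[OF L2 M1] dL2 cBA by simp
  ultimately show ?thesis by (simp add: X_def)
qed

definition ev :: "complex mat \<Rightarrow> complex multiset" where
  "ev A = proots (char_poly A)"

lemma cp_nonzero: assumes "A \<in> carrier_mat n n" shows "char_poly (A::'a::comm_ring_1 mat) \<noteq> 0"
proof
  assume "char_poly A = 0"
  with degree_monic_char_poly[OF assms] show False by simp
qed

lemma proots_lin_prod: "proots (\<Prod>e\<leftarrow>es. [:- e, 1:]) = mset (es :: 'a::idom list)"
proof -
  have "proots (\<Prod>p\<leftarrow>map (\<lambda>e. [:- e, 1:]) es. p) = (\<Sum>p\<leftarrow>map (\<lambda>e. [:- e, 1:]) es. proots p)"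
    by (rule proots_prod_list) auto
  also have "\<dots> = mset es" by (induct es) auto
  finally show ?thesis by simp
qed

lemma ev_sylvester: fixes A B :: "complex mat"
  assumes A: "A \<in> carrier_mat n m" and B: "B \<in> carrier_mat m n"
  shows "replicate_mset m 0 + ev (A*B) = replicate_mset n 0 + ev (B*A)"
proof -
  have AB: "A*B \<in> carrier_mat n n" and BA: "B*A \<in> carrier_mat m m" using A B by auto
  have pw: "proots ([:0,1:]^k :: complex poly) = replicate_mset k 0" for k
  proof -
    have "proots ([:0,1:]^k :: complex poly) = proots ((\<Prod>e\<leftarrow>replicate k (0::complex). [:- e, 1:]))"
      by (simp add: prod_list_replicate)
    thus ?thesis by (simp only: proots_lin_prod mset_replicate)
  qed
  from arg_cong[OF sylvester_cp[OF A B], of proots]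
  have nz: "([:0,1:]^k :: complex poly) \<noteq> 0" for k by simp
  show ?thesis unfolding ev_def
    using arg_cong[OF sylvester_cp[OF A B], of proots]
    unfolding proots_mult[OF nz cp_nonzero[OF AB]] proots_mult[OF nz cp_nonzero[OF BA]] pw .
qed

lemma ev_size: assumes A: "(A :: complex mat) \<in> carrier_mat n n" shows "size (ev A) = n"
proof -
  from char_poly_factorized[OF A] obtain es where "char_poly A = (\<Prod>e\<leftarrow>es. [:- e, 1:])" "length es = n" by auto
  thus ?thesis unfolding ev_def by (simp add: proots_lin_prod)
qed

lemma ev_one_minus: assumes A: "(A :: complex mat) \<in> carrier_mat n n"
  shows "ev (1\<^sub>m n - A) = image_mset (\<lambda>z. 1 - z) (ev A)"
proof -
  from char_poly_factorized[OF A] obtain es where c: "char_poly A = (\<Prod>e\<leftarrow>es. [:- e, 1:])" by auto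
  obtain B P Q where S: "schur_decomposition A es = (B,P,Q)" by (cases "schur_decomposition A es", auto)
  from schur_decomposition[OF A c S] have sim: "similar_mat_wit A B P Q" and ut: "upper_triangular B"
    and dB: "diag_mat B = es" by auto
  from similar_mat_witD2[OF A sim] have B: "B \<in> carrier_mat n n" and P: "P \<in> carrier_mat n n"
    and Q: "Q \<in> carrier_mat n n" and PQ: "P * Q = 1\<^sub>m n" and AB: "A = P * B * Q" by auto
  have "P * (1\<^sub>m n - B) = P - P * B"
    using P B mult_minus_distrib_mat[OF P one_carrier_mat B] by simp
  hence "P * (1\<^sub>m n - B) * Q = (P - P * B) * Q" by simp
  also have "\<dots> = P * Q - P * B * Q"
    by (rule minus_mult_distrib_mat[of _ n n], insert P B Q, auto)
  finally have eq: "1\<^sub>m n - A = P * (1\<^sub>m n - B) * Q" using PQ AB by simp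
  have c1: "1\<^sub>m n - A \<in> carrier_mat n n" "1\<^sub>m n - B \<in> carrier_mat n n" using A B by auto
  have sim2: "similar_mat_wit (1\<^sub>m n - A) (1\<^sub>m n - B) P Q"
    using sim eq c1 P Q unfolding similar_mat_wit_def Let_def by auto
  have ut2: "upper_triangular (1\<^sub>m n - B)" using ut B unfolding upper_triangular_def by auto
  have d2: "diag_mat (1\<^sub>m n - B) = map (\<lambda>z. 1 - z) es"
    unfolding dB[symmetric] using B by (auto simp: diag_mat_def)
  have "char_poly (1\<^sub>m n - A) = char_poly (1\<^sub>m n - B)"
    by (rule char_poly_similar, unfold similar_mat_def, rule exI, rule exI, rule sim2)
  also have "\<dots> = (\<Prod>e\<leftarrow>diag_mat (1\<^sub>m n - B). [:- e, 1:])"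
    by (rule char_poly_upper_triangular[OF c1(2) ut2])
  also have "\<dots> = (\<Prod>e\<leftarrow>map (\<lambda>z. 1 - z) es. [:- e, 1:])"
    unfolding d2 ..
  finally have cp2: "char_poly (1\<^sub>m n - A) = (\<Prod>e\<leftarrow>map (\<lambda>z. 1 - z) es. [:- e, 1:])" .
  show ?thesis unfolding ev_def c cp2 proots_lin_prod mset_map ..
qed

lemma ev_one: "ev (1\<^sub>m n) = replicate_mset n 1"
proof -
  have d: "diag_mat (1\<^sub>m n :: complex mat) = replicate n 1"
    by (rule nth_equalityI, auto simp: diag_mat_def)
  have "char_poly (1\<^sub>m n :: complex mat) = (\<Prod>e\<leftarrow>diag_mat (1\<^sub>m n :: complex mat). [:- e, 1:])"
    by (rule char_poly_upper_triangular[OF one_carrier_mat], auto simp: upper_triangular_def)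
  also have "\<dots> = (\<Prod>e\<leftarrow>replicate n (1::complex). [:- e, 1:])" unfolding d ..
  finally have cp2: "char_poly (1\<^sub>m n :: complex mat) = (\<Prod>e\<leftarrow>replicate n (1::complex). [:- e, 1:])" .
  show ?thesis unfolding ev_def cp2 proots_lin_prod mset_replicate ..
qed

lemma ev_eigen: assumes A: "(A :: complex mat) \<in> carrier_mat n n" and z: "z \<in># ev A"
  shows "eigenvalue A z"
proof -
  have "poly (char_poly A) z = 0" using z cp_nonzero[OF A] unfolding ev_def
    by (metis mem_Collect_eq set_count_proots)
  thus ?thesis using eigenvalue_root_char_poly[OF A] by simp
qed

lemma gram_ev: assumes A: "(A :: complex mat) \<in> carrier_mat n m"
  and z: "z \<in># ev (mat_adjoint A * A)"
  shows "z = complex_of_real (Re z) \<and> Re z \<ge> 0"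
proof -
  have G: "mat_adjoint A * A \<in> carrier_mat m m" using A by auto
  from ev_eigen[OF G z] obtain v where v: "v \<in> carrier_vec m" and v0: "v \<noteq> 0\<^sub>v m"
    and ev: "(mat_adjoint A * A) *\<^sub>v v = z \<cdot>\<^sub>v v"
    unfolding eigenvalue_def eigenvector_def using G by auto
  define w where "w = A *\<^sub>v v"
  have w: "w \<in> carrier_vec n" using A v unfolding w_def by auto
  have "(mat_adjoint A * A) *\<^sub>v v = mat_adjoint A *\<^sub>v w"
    unfolding w_def using A v by (simp add: assoc_mult_mat_vec[of _ m n])
  hence ev2: "mat_adjoint A *\<^sub>v w = z \<cdot>\<^sub>v v" using ev by simp
  have "(\<Sum>i<m. cnj (v$i) * (mat_adjoint A *\<^sub>v w)$i) = (\<Sum>i<m. cnj (v$i) * (\<Sum>l<n. cnj (A$$(l,i)) * w$l))"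
    using A w by (intro sum.cong refl, auto simp: scalar_prod_def lessThan_atLeast0)
  also have "\<dots> = (\<Sum>l<n. w$l * cnj (\<Sum>i<m. A$$(l,i) * v$i))"
    by (simp add: sum_distrib_left sum_distrib_right mult_ac sum.swap[of _ "{..<m}"])
  also have "\<dots> = (\<Sum>l<n. w$l * cnj (w$l))"
    using A v by (intro sum.cong refl, auto simp: w_def scalar_prod_def lessThan_atLeast0)
  also have "\<dots> = complex_of_real (\<Sum>l<n. (cmod (w$l))^2)"
    by (simp only: of_real_sum complex_norm_square)
  finally have e1: "(\<Sum>i<m. cnj (v$i) * (mat_adjoint A *\<^sub>v w)$i) = complex_of_real (\<Sum>l<n. (cmod (w$l))^2)" .
  have "(\<Sum>i<m. cnj (v$i) * (mat_adjoint A *\<^sub>v w)$i) = (\<Sum>i<m. z * (v$i * cnj (v$i)))"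
    unfolding ev2 using v by (intro sum.cong refl, auto)
  also have "\<dots> = z * complex_of_real (\<Sum>i<m. (cmod (v$i))^2)"
    by (simp only: of_real_sum complex_norm_square sum_distrib_left)
  finally have e2: "z * complex_of_real (\<Sum>i<m. (cmod (v$i))^2) = complex_of_real (\<Sum>l<n. (cmod (w$l))^2)"
    using e1 by simp
  have "\<exists>i<m. v$i \<noteq> 0" using v v0 by (metis carrier_vecD eq_vecI index_zero_vec(1) index_zero_vec(2))
  then obtain i where i: "i < m" "v$i \<noteq> 0" by auto
  have S: "(\<Sum>i<m. (cmod (v$i))^2) > 0"
    by (rule sum_pos2[of _ i], insert i, auto)
  have T: "(\<Sum>l<n. (cmod (w$l))^2) \<ge> 0" by (rule sum_nonneg, auto)
  define SS where "SS = (\<Sum>i<m. (cmod (v$i))^2)"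
  define TT where "TT = (\<Sum>l<n. (cmod (w$l))^2)"
  have e3: "z * complex_of_real SS = complex_of_real TT" using e2 unfolding SS_def TT_def .
  have nz: "complex_of_real SS \<noteq> 0" using S unfolding SS_def by (simp only: of_real_eq_0_iff)
  have "z = complex_of_real TT / complex_of_real SS" using e3 nz by (simp add: eq_divide_eq)
  hence "z = complex_of_real (TT / SS)" by simp
  hence "z = complex_of_real ((\<Sum>l<n. (cmod (w$l))^2) / (\<Sum>i<m. (cmod (v$i))^2))"
    unfolding SS_def TT_def .
  thus ?thesis using S T by auto
qed

lemma pick_bij: assumes "finite S" shows "bij_betw (pick S) {..<card S} S"
proof (rule bij_betw_imageI)
  show "inj_on (pick S) {..<card S}"
  proof (rule inj_onI)
    fix x y assume x: "x \<in> {..<card S}" and y: "y \<in> {..<card S}" and e: "pick S x = pick S y"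
    show "x = y"
    proof (rule ccontr)
      assume "x \<noteq> y"
      hence "x < y \<or> y < x" by auto
      thus False using pick_mono[of y S x] pick_mono[of x S y] x y e by (metis lessThan_iff less_irrefl)
    qed
  qed
  show "pick S ` {..<card S} = S"
  proof
    show "pick S ` {..<card S} \<subseteq> S"
    proof
      fix y assume "y \<in> pick S ` {..<card S}"
      then obtain n where n: "n < card S" "y = pick S n" by auto
      show "y \<in> S" using pick_in_set[of n S] n by blast
    qed
    show "S \<subseteq> pick S ` {..<card S}"
    proof
      fix x assume x: "x \<in> S"
      have "{a\<in>S. a < x} \<subset> S" using x by blast
      hence c: "card {a\<in>S. a < x} \<in> {..<card S}" using psubset_card_mono[OF assms] by blast
      have "x = pick S (card {a\<in>S. a < x})" using pick_card_in_set[OF x] by simp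
      thus "x \<in> pick S ` {..<card S}" using c by blast
    qed
  qed
qed

lemma sum_pick: assumes "finite S" shows "(\<Sum>l<card S. f (pick S l)) = (\<Sum>l\<in>S. f l)"
  using sum.reindex_bij_betw[OF pick_bij[OF assms], of f] .

lemma pick_less: assumes "K \<subseteq> {0..<M}" "j < card K" shows "pick K j < M"
proof -
  have "pick K j \<in> K" by (rule pick_in_set, rule disjI1, rule assms(2))
  thus ?thesis using assms(1) by auto
qed

lemma pick_atLeast0: assumes "i < r" shows "pick {0..<r} i = i"
proof -
  have "i < card {a. a < r \<and> a \<in> UNIV}" using assms by simp
  from pick_reduce_set[OF this] have "pick UNIV i = pick {a. a < r \<and> a \<in> UNIV} i" .
  moreover have "{a. a < r \<and> a \<in> UNIV} = {0..<r}" by auto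
  ultimately show ?thesis by (simp add: pick_UNIV)
qed

lemma col_submat_dims: assumes "K \<subseteq> {0..<dim_col A}"
  shows "dim_row (col_submat A K) = dim_row A" "dim_col (col_submat A K) = card K"
proof -
  have "{i. i < dim_row A \<and> i \<in> {0..<dim_row A}} = {0..<dim_row A}" by auto
  thus "dim_row (col_submat A K) = dim_row A" unfolding col_submat_def dim_submatrix by simp
  have "{j. j < dim_col A \<and> j \<in> K} = K" using assms by auto
  thus "dim_col (col_submat A K) = card K" unfolding col_submat_def dim_submatrix by simp
qed

lemma col_submat_carrier: assumes "A \<in> carrier_mat r M" "K \<subseteq> {0..<M}"
  shows "col_submat A K \<in> carrier_mat r (card K)"
proof -
  have d: "dim_col A = M" "dim_row A = r" using assms(1) by auto
  hence "K \<subseteq> {0..<dim_col A}" using assms(2) by simp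
  from col_submat_dims[OF this] d show ?thesis unfolding carrier_mat_def by simp
qed

lemma col_submat_index: assumes "K \<subseteq> {0..<dim_col A}" "i < dim_row A" "j < card K"
  shows "col_submat A K $$ (i,j) = A $$ (i, pick K j)"
proof -
  have r: "{i. i < dim_row A \<and> i \<in> {0..<dim_row A}} = {0..<dim_row A}" by auto
  have c: "{j. j < dim_col A \<and> j \<in> K} = K" using assms by auto
  show ?thesis unfolding col_submat_def
    by (subst submatrix_index, insert assms r c, auto simp: pick_atLeast0)
qed

lemma adj_sub: assumes X: "X \<in> carrier_mat r M" and Y: "Y \<in> carrier_mat r M"
  and K: "K \<subseteq> {0..<M}" and i: "i < card K" and j: "j < card K"
  shows "(mat_adjoint (col_submat X K) * col_submat Y K) $$ (i,j) = (mat_adjoint X * Y) $$ (pick K i, pick K j)"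
proof -
  have Xs: "col_submat X K \<in> carrier_mat r (card K)" by (rule col_submat_carrier[OF X K])
  have Ys: "col_submat Y K \<in> carrier_mat r (card K)" by (rule col_submat_carrier[OF Y K])
  have pi: "pick K i < M" and pj: "pick K j < M" using pick_less[OF K] i j by auto
  have "(mat_adjoint (col_submat X K) * col_submat Y K) $$ (i,j) = (\<Sum>l<r. conjugate (X $$ (l, pick K i)) * Y $$ (l, pick K j))"
    using Xs Ys i j X Y K by (auto simp: scalar_prod_def lessThan_atLeast0 col_submat_index intro!: sum.cong)
  also have "\<dots> = (mat_adjoint X * Y) $$ (pick K i, pick K j)"
    using X Y pi pj by (auto simp: scalar_prod_def lessThan_atLeast0 intro!: sum.cong)
  finally show ?thesis .
qed

lemma split_sub: assumes X: "X \<in> carrier_mat r M" and K: "K \<subseteq> {0..<M}"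
  shows "col_submat X K * mat_adjoint (col_submat X K) + col_submat X ({0..<M} - K) * mat_adjoint (col_submat X ({0..<M} - K)) = X * mat_adjoint X"
proof -
  define Kc where "Kc = {0..<M} - K"
  have Kc: "Kc \<subseteq> {0..<M}" unfolding Kc_def by auto
  have fK: "finite K" "finite Kc" using K Kc finite_subset by auto
  have Xs: "col_submat X K \<in> carrier_mat r (card K)" by (rule col_submat_carrier[OF X K])
  have Xc: "col_submat X Kc \<in> carrier_mat r (card Kc)" by (rule col_submat_carrier[OF X Kc])
  have gen: "(col_submat X S * mat_adjoint (col_submat X S)) $$ (i,j) = (\<Sum>l\<in>S. X $$ (i,l) * conjugate (X $$ (j,l)))"
    if S: "S \<subseteq> {0..<M}" and i: "i < r" and j: "j < r" for S i j
  proof -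
    have Ss: "col_submat X S \<in> carrier_mat r (card S)" by (rule col_submat_carrier[OF X S])
    have fS: "finite S" using S finite_subset by auto
    have "(col_submat X S * mat_adjoint (col_submat X S)) $$ (i,j) = (\<Sum>l<card S. X $$ (i,pick S l) * conjugate (X $$ (j,pick S l)))"
      using Ss i j X S by (auto simp: scalar_prod_def lessThan_atLeast0 col_submat_index intro!: sum.cong)
    also have "\<dots> = (\<Sum>l\<in>S. X $$ (i,l) * conjugate (X $$ (j,l)))"
      by (rule sum_pick[OF fS, of "\<lambda>l. X $$ (i,l) * conjugate (X $$ (j,l))"])
    finally show ?thesis .
  qed
  show ?thesis unfolding Kc_def[symmetric]
  proof (rule eq_matI)
    fix i j assume i: "i < dim_row (X * mat_adjoint X)" and j: "j < dim_col (X * mat_adjoint X)"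
    hence i: "i < r" and j: "j < r" using X by auto
    have "(col_submat X K * mat_adjoint (col_submat X K) + col_submat X Kc * mat_adjoint (col_submat X Kc)) $$ (i,j)
       = (\<Sum>l\<in>K. X $$ (i,l) * conjugate (X $$ (j,l))) + (\<Sum>l\<in>Kc. X $$ (i,l) * conjugate (X $$ (j,l)))"
      using gen[OF K i j] gen[OF Kc i j] Xs Xc i j by simp
    also have "\<dots> = (\<Sum>l\<in>{0..<M}. X $$ (i,l) * conjugate (X $$ (j,l)))"
      unfolding Kc_def using K by (subst sum.subset_diff[of K "{0..<M}"], auto)
    also have "\<dots> = (X * mat_adjoint X) $$ (i,j)"
      using X i j by (auto simp: scalar_prod_def intro!: sum.cong)
    finally show "(col_submat X K * mat_adjoint (col_submat X K) + col_submat X Kc * mat_adjoint (col_submat X Kc)) $$ (i,j) = (X * mat_adjoint X) $$ (i,j)" .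
  qed (insert X Xs Xc, auto)
qed

lemma replicate_mset_plus: "replicate_mset (m + n) a = replicate_mset m a + replicate_mset n a"
  by (induct m) auto

lemma adj_mult: assumes A: "(A :: complex mat) \<in> carrier_mat n k" and B: "B \<in> carrier_mat k m"
  shows "mat_adjoint (A * B) = mat_adjoint B * mat_adjoint A"
proof (rule eq_matI)
  fix i j assume i: "i < dim_row (mat_adjoint B * mat_adjoint A)" and j: "j < dim_col (mat_adjoint B * mat_adjoint A)"
  hence i: "i < m" and j: "j < n" using A B by auto
  show "mat_adjoint (A * B) $$ (i, j) = (mat_adjoint B * mat_adjoint A) $$ (i, j)"
    using A B i j by (auto simp: scalar_prod_def mult.commute intro!: sum.cong)
qed (insert A B, auto)

lemma adj_adj: "mat_adjoint (mat_adjoint (A :: complex mat)) = A"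
  by (rule eq_matI, auto)

lemma gram_zero: assumes T: "(T :: complex mat) \<in> carrier_mat n m" and z: "mat_adjoint T * T = 0\<^sub>m m m"
  shows "T = 0\<^sub>m n m"
proof (rule eq_matI)
  fix i j assume i: "i < dim_row (0\<^sub>m n m)" and j: "j < dim_col (0\<^sub>m n m)"
  hence i: "i < n" and j: "j < m" by auto
  have "(mat_adjoint T * T) $$ (j,j) = (\<Sum>l<n. cnj (T $$ (l,j)) * T $$ (l,j))"
    using T j by (auto simp: scalar_prod_def lessThan_atLeast0 intro!: sum.cong)
  also have "\<dots> = complex_of_real (\<Sum>l<n. (cmod (T $$ (l,j)))^2)"
    by (simp only: of_real_sum complex_norm_square mult.commute)
  finally have "complex_of_real (\<Sum>l<n. (cmod (T $$ (l,j)))^2) = 0" using z j by simp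
  hence s: "(\<Sum>l<n. (cmod (T $$ (l,j)))^2) = 0" by (simp only: of_real_eq_0_iff)
  have "(cmod (T $$ (i,j)))^2 = 0"
    using sum_nonneg_eq_0_iff[of "{..<n}" "\<lambda>l. (cmod (T $$ (l,j)))^2"] s i by auto
  thus "T $$ (i,j) = 0\<^sub>m n m $$ (i,j)" using i j by simp
qed (insert T, auto)

lemma psi_id: fixes Phi Psi :: "complex mat"
  assumes Phi: "Phi \<in> carrier_mat N M" and Psi: "Psi \<in> carrier_mat (M - N) M" and MN: "N < M"
  and pars: "Phi * mat_adjoint Phi = 1\<^sub>m N"
  and naim: "mat_adjoint Psi * Psi = 1\<^sub>m M - mat_adjoint Phi * Phi"
  shows "Psi * mat_adjoint Psi = 1\<^sub>m (M - N)"
proof -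
  define d where "d = M - N"
  have M: "M = N + d" unfolding d_def using MN by auto
  have Psi': "Psi \<in> carrier_mat d M" using Psi unfolding d_def .
  have aPhi: "mat_adjoint Phi \<in> carrier_mat M N" using Phi by simp
  have aPsi: "mat_adjoint Psi \<in> carrier_mat M d" using Psi' by simp
  have P: "mat_adjoint Phi * Phi \<in> carrier_mat M M" by (rule mult_carrier_mat[OF aPhi Phi])
  define G where "G = Psi * mat_adjoint Psi"
  have G: "G \<in> carrier_mat d d" unfolding G_def by (rule mult_carrier_mat[OF Psi' aPsi])
  have "replicate_mset M 0 + ev (Phi * mat_adjoint Phi) = replicate_mset N 0 + ev (mat_adjoint Phi * Phi)"
    by (rule ev_sylvester[OF Phi aPhi])
  hence "replicate_mset N 0 + (replicate_mset d 0 + replicate_mset N 1) = replicate_mset N 0 + ev (mat_adjoint Phi * Phi)"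
    unfolding pars ev_one M by (simp add: replicate_mset_plus ac_simps)
  hence evP: "ev (mat_adjoint Phi * Phi) = replicate_mset d 0 + replicate_mset N 1"
    by (simp only: add_left_cancel)
  have evQ: "ev (mat_adjoint Psi * Psi) = replicate_mset d 1 + replicate_mset N 0"
    unfolding naim ev_one_minus[OF P] evP by simp
  have "replicate_mset d 0 + ev (mat_adjoint Psi * Psi) = replicate_mset M 0 + ev G"
    unfolding G_def by (rule ev_sylvester[OF aPsi Psi'])
  hence "replicate_mset (d + N) 0 + replicate_mset d 1 = replicate_mset (d + N) 0 + ev G"
    unfolding evQ M by (simp add: replicate_mset_plus ac_simps)
  hence evG: "ev G = replicate_mset d 1" by (simp only: add_left_cancel)
  define T where "T = Psi * mat_adjoint Phi"
  have T: "T \<in> carrier_mat d N" unfolding T_def by (rule mult_carrier_mat[OF Psi' aPhi])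
  have "mat_adjoint Psi * Psi * mat_adjoint Phi = (1\<^sub>m M - mat_adjoint Phi * Phi) * mat_adjoint Phi"
    unfolding naim ..
  also have "\<dots> = mat_adjoint Phi - mat_adjoint Phi * Phi * mat_adjoint Phi"
    using aPhi P by (simp add: minus_mult_distrib_mat[of _ M M] left_mult_one_mat[OF aPhi])
  also have "mat_adjoint Phi * Phi * mat_adjoint Phi = mat_adjoint Phi"
    unfolding assoc_mult_mat[OF aPhi Phi aPhi] pars by (rule right_mult_one_mat[OF aPhi])
  finally have z1: "mat_adjoint Psi * Psi * mat_adjoint Phi = 0\<^sub>m M N" using aPhi by simp
  have aT: "mat_adjoint T = Phi * mat_adjoint Psi"
    unfolding T_def adj_mult[OF Psi' aPhi] adj_adj ..
  have "mat_adjoint T * T = Phi * (mat_adjoint Psi * Psi * mat_adjoint Phi)"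
    unfolding aT unfolding T_def
    by (simp only: assoc_mult_mat[OF Phi aPsi T[unfolded T_def]] assoc_mult_mat[OF aPsi Psi' aPhi])
  also have "\<dots> = 0\<^sub>m N N" unfolding z1 using Phi by simp
  finally have T0: "T = 0\<^sub>m d N" using gram_zero[OF T] by simp
  have "G * G = Psi * (mat_adjoint Psi * Psi) * mat_adjoint Psi"
    unfolding G_def
    by (simp only: assoc_mult_mat[OF Psi' aPsi G[unfolded G_def]] assoc_mult_mat[OF Psi' mult_carrier_mat[OF aPsi Psi'] aPsi]
      assoc_mult_mat[OF aPsi Psi' aPsi])
  also have "\<dots> = Psi * (1\<^sub>m M - mat_adjoint Phi * Phi) * mat_adjoint Psi" unfolding naim ..
  also have "\<dots> = G - T * mat_adjoint T"
  proof -
    have "Psi * (1\<^sub>m M - mat_adjoint Phi * Phi) = Psi - Psi * (mat_adjoint Phi * Phi)"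
      unfolding mult_minus_distrib_mat[OF Psi' one_carrier_mat P] right_mult_one_mat[OF Psi'] ..
    hence "Psi * (1\<^sub>m M - mat_adjoint Phi * Phi) * mat_adjoint Psi = (Psi - Psi * (mat_adjoint Phi * Phi)) * mat_adjoint Psi"
      by simp
    also have "\<dots> = Psi * mat_adjoint Psi - Psi * (mat_adjoint Phi * Phi) * mat_adjoint Psi"
      by (rule minus_mult_distrib_mat[OF Psi' mult_carrier_mat[OF Psi' P] aPsi])
    also have "Psi * (mat_adjoint Phi * Phi) * mat_adjoint Psi = T * mat_adjoint T"
      unfolding aT unfolding T_def
      by (simp only: assoc_mult_mat[OF Psi' P aPsi] assoc_mult_mat[OF aPhi Phi aPsi]
          assoc_mult_mat[OF Psi' aPhi mult_carrier_mat[OF Phi aPsi]])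
    finally show ?thesis unfolding G_def .
  qed
  also have "\<dots> = G" unfolding T0 using G by (intro eq_matI, auto)
  finally have GG: "G * G = G" .
  show ?thesis unfolding d_def[symmetric] G_def[symmetric]
  proof (rule ccontr)
    assume ne: "G \<noteq> 1\<^sub>m d"
    have "\<exists>i<d. \<exists>j<d. G $$ (i,j) \<noteq> 1\<^sub>m d $$ (i,j)"
    proof (rule ccontr)
      assume "\<not> (\<exists>i<d. \<exists>j<d. G $$ (i,j) \<noteq> 1\<^sub>m d $$ (i,j))"
      hence nex: "\<forall>i<d. \<forall>j<d. G $$ (i,j) = 1\<^sub>m d $$ (i,j)" by blast
      have "G = 1\<^sub>m d"
      proof (rule eq_matI)
        fix i j assume "i < dim_row (1\<^sub>m d)" "j < dim_col (1\<^sub>m d)"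
        hence "i < d" "j < d" by auto
        thus "G $$ (i,j) = 1\<^sub>m d $$ (i,j)" using nex by blast
      qed (insert G, auto)
      with ne show False ..
    qed
    then obtain i j where ij: "i < d" "j < d" "G $$ (i,j) \<noteq> 1\<^sub>m d $$ (i,j)" by auto
    define v where "v = col (1\<^sub>m d - G) j"
    have v: "v \<in> carrier_vec d" unfolding v_def carrier_vec_def using G by auto
    have v0: "v \<noteq> 0\<^sub>v d"
    proof
      assume "v = 0\<^sub>v d"
      hence "v $ i = 0" using ij by simp
      thus False unfolding v_def using ij G by simp
    qed
    have "G * (1\<^sub>m d - G) = G - G * G"
      unfolding mult_minus_distrib_mat[OF G one_carrier_mat G] right_mult_one_mat[OF G] ..
    hence GZ: "G * (1\<^sub>m d - G) = 0\<^sub>m d d" unfolding GG using G by (simp add: minus_r_inv_mat)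
    have "G *\<^sub>v v = col (G * (1\<^sub>m d - G)) j" unfolding v_def
      by (rule col_mult2[symmetric, OF G _ ij(2)], insert G, auto)
    also have "\<dots> = 0 \<cdot>\<^sub>v v" unfolding GZ using ij v by auto
    finally have "eigenvector G v 0" unfolding eigenvector_def using v v0 G by auto
    hence "eigenvalue G 0" unfolding eigenvalue_def by blast
    hence "poly (char_poly G) 0 = 0" using eigenvalue_root_char_poly[OF G] by simp
    hence "0 \<in># ev G" unfolding ev_def using cp_nonzero[OF G] by simp
    thus False unfolding evG by (simp split: if_splits)
  qed
qed

definition rs :: "real multiset \<Rightarrow> real list" where
  "rs X = rev (sorted_list_of_multiset X)"

lemma rs_split: assumes "\<forall>x\<in>#X. \<forall>y\<in>#Y. y \<le> x"
  shows "rs (X + Y) = rs X @ rs Y"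
proof -
  define L where "L = sorted_list_of_multiset Y @ sorted_list_of_multiset X"
  have s: "sorted L" unfolding L_def using assms by (auto simp: sorted_append)
  have m: "mset L = X + Y" unfolding L_def by simp
  have "sorted_list_of_multiset (X + Y) = L"
    unfolding m[symmetric] sorted_list_of_multiset_mset using s by (simp add: sorted_sort_id)
  thus ?thesis unfolding rs_def L_def by simp
qed

lemma rs_rep: "rs (replicate_mset n c) = replicate n c"
proof -
  have "sorted_list_of_multiset (mset (replicate n c)) = replicate n c"
    unfolding sorted_list_of_multiset_mset by (simp add: sorted_sort_id)
  thus ?thesis unfolding rs_def by simp
qed

lemma rs_length: "length (rs X) = size X"
  unfolding rs_def by (metis length_rev mset_sorted_list_of_multiset size_mset)

lemma real_part:
  fixes \<alpha> \<beta> \<gamma> \<eta> :: "real multiset"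
  assumes e1: "replicate_mset d 0 + \<alpha> = replicate_mset (M - k) 0 + \<eta>"
  and e2: "\<eta> = image_mset (\<lambda>x. 1 - x) \<gamma>"
  and e3: "replicate_mset k 0 + \<gamma> = replicate_mset d 0 + image_mset (\<lambda>x. 1 - x) \<beta>"
  and nb: "\<forall>x\<in>#\<beta>. x \<ge> 0" and ng: "\<forall>x\<in>#\<gamma>. x \<ge> 0" and ne: "\<forall>x\<in>#\<eta>. x \<ge> 0"
  and kN: "k \<le> N" and M: "M = N + d"
  shows "(k \<le> d \<longrightarrow> rs (image_mset sqrt \<alpha>) = replicate (d - k) 1 @ rs (image_mset sqrt \<beta>) @ replicate (N - k) 0)
    \<and> (d < k \<longrightarrow> rs (image_mset sqrt \<beta>) = replicate (k - d) 1 @ rs (image_mset sqrt \<eta>)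
         \<and> rs (image_mset sqrt \<alpha>) = rs (image_mset sqrt \<eta>) @ replicate (N - k) 0)"
proof -
  have "image_mset (\<lambda>x. 1 - x) (replicate_mset k 0 + \<gamma>) = image_mset (\<lambda>x. 1 - x) (replicate_mset d 0 + image_mset (\<lambda>x. 1 - x) \<beta>)"
    using e3 by simp
  hence e4: "replicate_mset k 1 + \<eta> = replicate_mset d 1 + \<beta>"
    unfolding e2 by (simp add: multiset.map_comp o_def)
  have b1: "\<forall>x\<in>#\<beta>. x \<le> 1"
  proof
    fix x assume x: "x \<in># \<beta>"
    hence "1 - x \<in># replicate_mset d 0 + image_mset (\<lambda>x. 1 - x) \<beta>" by auto
    hence "1 - x \<in># replicate_mset k 0 + \<gamma>" unfolding e3 .
    hence "1 - x = 0 \<or> 1 - x \<in># \<gamma>" by (auto split: if_splits)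
    thus "x \<le> 1" using ng by auto
  qed
  have Mk: "M - k = d + (N - k)" using M kN by auto
  have e1': "\<alpha> = replicate_mset (N - k) 0 + \<eta>"
    using e1 unfolding Mk replicate_mset_plus by (simp add: ac_simps)
  have sb: "\<forall>x\<in>#image_mset sqrt \<beta>. 0 \<le> x \<and> x \<le> 1" using nb b1 by auto
  show ?thesis
  proof (intro conjI impI)
    assume kd: "k \<le> d"
    have "replicate_mset k 1 + \<eta> = replicate_mset k 1 + (replicate_mset (d - k) 1 + \<beta>)"
      using e4 kd unfolding replicate_mset_plus[symmetric] by (simp add: replicate_mset_plus[symmetric])
    hence eta: "\<eta> = replicate_mset (d - k) 1 + \<beta>" by (simp only: add_left_cancel)
    have "image_mset sqrt \<alpha> = (replicate_mset (d - k) 1 + image_mset sqrt \<beta>) + replicate_mset (N - k) 0"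
      unfolding e1' eta by (simp add: ac_simps)
    also have "rs \<dots> = rs (replicate_mset (d - k) 1 + image_mset sqrt \<beta>) @ rs (replicate_mset (N - k) 0)"
      by (rule rs_split, insert sb, auto)
    also have "rs (replicate_mset (d - k) 1 + image_mset sqrt \<beta>) = replicate (d - k) 1 @ rs (image_mset sqrt \<beta>)"
      by (subst rs_split, insert sb, auto simp: rs_rep)
    finally show "rs (image_mset sqrt \<alpha>) = replicate (d - k) 1 @ rs (image_mset sqrt \<beta>) @ replicate (N - k) 0"
      by (simp add: rs_rep)
  next
    assume dk: "d < k"
    have "replicate_mset d 1 + \<beta> = replicate_mset d 1 + (replicate_mset (k - d) 1 + \<eta>)"
      using e4 dk by (simp add: replicate_mset_plus[symmetric] ac_simps)
    hence beta: "\<beta> = replicate_mset (k - d) 1 + \<eta>" by (simp only: add_left_cancel)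
    have se: "\<forall>x\<in>#image_mset sqrt \<eta>. 0 \<le> x \<and> x \<le> 1" using sb unfolding beta by auto
    show "rs (image_mset sqrt \<beta>) = replicate (k - d) 1 @ rs (image_mset sqrt \<eta>)"
      unfolding beta by (simp, subst rs_split, insert se, auto simp: rs_rep)
    have "image_mset sqrt \<alpha> = image_mset sqrt \<eta> + replicate_mset (N - k) 0"
      unfolding e1' by (simp add: ac_simps)
    thus "rs (image_mset sqrt \<alpha>) = rs (image_mset sqrt \<eta>) @ replicate (N - k) 0"
      by (simp, subst rs_split, insert se, auto simp: rs_rep)
  qed
qed

lemma sv_rs: "singular_values F = take (min (dim_row F) (dim_col F))
   (rs (image_mset sqrt (image_mset Re (ev (mat_adjoint F * F)))))"
  unfolding singular_values_def rs_def ev_def by (simp add: multiset.map_comp o_def)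

lemma gram_re: assumes "(A :: complex mat) \<in> carrier_mat n m"
  shows "\<forall>x\<in># image_mset Re (ev (mat_adjoint A * A)). x \<ge> 0"
  using gram_ev[OF assms] by auto

lemma minus_from_sum: assumes X: "(X :: complex mat) \<in> carrier_mat n n" and Y: "Y \<in> carrier_mat n n"
  and s: "X + Y = 1\<^sub>m n" shows "Y = 1\<^sub>m n - X"
proof (rule eq_matI)
  fix i j assume "i < dim_row (1\<^sub>m n - X)" "j < dim_col (1\<^sub>m n - X)"
  hence i: "i < n" and j: "j < n" using X by auto
  have "(X + Y) $$ (i,j) = 1\<^sub>m n $$ (i,j)" unfolding s ..
  hence "X $$ (i,j) + Y $$ (i,j) = 1\<^sub>m n $$ (i,j)" using X Y i j by simp
  thus "Y $$ (i,j) = (1\<^sub>m n - X) $$ (i,j)" using X i j by (simp add: algebra_simps)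
qed (insert X Y, auto)

theorem proposition13:
  fixes Phi Psi :: "complex mat" and N M k :: nat and K :: "nat set" and F :: "complex set"
  assumes field: "F = \<real> \<or> F = UNIV"
    and entries_Phi: "\<forall>i<N. \<forall>j<M. Phi $$ (i, j) \<in> F"
    and entries_Psi: "\<forall>i<M - N. \<forall>j<M. Psi $$ (i, j) \<in> F"
    and MN: "M > N"
    and Phi_dim: "Phi \<in> carrier_mat N M"
    and Psi_dim: "Psi \<in> carrier_mat (M - N) M"
    and parseval: "Phi * mat_adjoint Phi = 1\<^sub>m N"
    and naimark: "mat_adjoint Psi * Psi = 1\<^sub>m M - mat_adjoint Phi * Phi"
    and K: "K \<subseteq> {0..<M}" and cardK: "card K = k" and kN: "k \<le> N"
  shows "(k \<le> M - N \<longrightarrow>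
            (\<forall>i\<in>{1..M - N - k}. sigma (col_submat Psi ({0..<M} - K)) i = 1) \<and>
            (\<forall>j\<in>{1..k}. sigma (col_submat Psi ({0..<M} - K)) (M - N - k + j)
                            = sigma (col_submat Phi K) j))
       \<and> (k > M - N \<longrightarrow>
            (\<forall>i\<in>{1..k - (M - N)}. sigma (col_submat Phi K) i = 1) \<and>
            (\<forall>i\<in>{1..M - N}. sigma (col_submat Psi ({0..<M} - K)) i
                            = sigma (col_submat Phi K) (i + k - (M - N))))"
proof -
  define d where "d = M - N"
  have Md: "M = N + d" unfolding d_def using MN by auto
  have Psi': "Psi \<in> carrier_mat d M" using Psi_dim unfolding d_def .
  define Kc where "Kc = {0..<M} - K"
  have Kc: "Kc \<subseteq> {0..<M}" unfolding Kc_def by auto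
  have cKc: "card Kc = M - k" unfolding Kc_def using K cardK by (simp add: card_Diff_subset finite_subset)
  define A where "A = col_submat Psi Kc"
  define B where "B = col_submat Phi K"
  define C where "C = col_submat Psi K"
  have A: "A \<in> carrier_mat d (M - k)" unfolding A_def using col_submat_carrier[OF Psi' Kc] cKc by simp
  have B: "B \<in> carrier_mat N k" unfolding B_def using col_submat_carrier[OF Phi_dim K] cardK by simp
  have C: "C \<in> carrier_mat d k" unfolding C_def using col_submat_carrier[OF Psi' K] cardK by simp
  have aA: "mat_adjoint A \<in> carrier_mat (M - k) d" using A by simp
  have aB: "mat_adjoint B \<in> carrier_mat k N" using B by simp
  have aC: "mat_adjoint C \<in> carrier_mat k d" using C by simp
  have BB: "mat_adjoint B * B \<in> carrier_mat k k" by (rule mult_carrier_mat[OF aB B])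
  have CC: "C * mat_adjoint C \<in> carrier_mat d d" by (rule mult_carrier_mat[OF C aC])
  have AA: "A * mat_adjoint A \<in> carrier_mat d d" by (rule mult_carrier_mat[OF A aA])
  have inj: "inj_on (pick K) {..<card K}" using pick_bij[of K] K finite_subset
    by (metis bij_betw_def finite_atLeastLessThan)
  have CstarC: "mat_adjoint C * C = 1\<^sub>m k - mat_adjoint B * B"
  proof (rule eq_matI)
    fix i j assume "i < dim_row (1\<^sub>m k - mat_adjoint B * B)" "j < dim_col (1\<^sub>m k - mat_adjoint B * B)"
    hence i: "i < k" and j: "j < k" using BB by auto
    have pi: "pick K i < M" and pj: "pick K j < M" using pick_less[OF K] i j cardK by auto
    have eq: "(pick K i = pick K j) = (i = j)" using inj i j cardK by (auto dest: inj_onD)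
    have "(mat_adjoint C * C) $$ (i,j) = (mat_adjoint Psi * Psi) $$ (pick K i, pick K j)"
      unfolding C_def by (rule adj_sub[OF Psi' Psi' K], insert i j cardK, auto)
    also have "\<dots> = (if i = j then 1 else 0) - (mat_adjoint Phi * Phi) $$ (pick K i, pick K j)"
      unfolding naimark using pi pj eq Phi_dim by simp
    also have "(mat_adjoint Phi * Phi) $$ (pick K i, pick K j) = (mat_adjoint B * B) $$ (i,j)"
      unfolding B_def by (rule adj_sub[symmetric, OF Phi_dim Phi_dim K], insert i j cardK, auto)
    finally show "(mat_adjoint C * C) $$ (i,j) = (1\<^sub>m k - mat_adjoint B * B) $$ (i,j)"
      using i j carrier_matD[OF BB] by simp
  qed (insert C BB, auto)
  have "C * mat_adjoint C + A * mat_adjoint A = Psi * mat_adjoint Psi"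
    unfolding A_def C_def Kc_def by (rule split_sub[OF Psi' K])
  also have "\<dots> = 1\<^sub>m d" unfolding d_def by (rule psi_id[OF Phi_dim Psi_dim MN parseval naimark])
  finally have AAstar: "A * mat_adjoint A = 1\<^sub>m d - C * mat_adjoint C"
    by (rule minus_from_sum[OF CC AA])
  have e1: "replicate_mset d 0 + ev (mat_adjoint A * A) = replicate_mset (M - k) 0 + ev (A * mat_adjoint A)"
    by (rule ev_sylvester[OF aA A])
  have e2: "ev (A * mat_adjoint A) = image_mset (\<lambda>z. 1 - z) (ev (C * mat_adjoint C))"
    unfolding AAstar by (rule ev_one_minus[OF CC])
  have e3: "replicate_mset k 0 + ev (C * mat_adjoint C) = replicate_mset d 0 + ev (mat_adjoint C * C)"
    by (rule ev_sylvester[OF C aC])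
  have e4: "ev (mat_adjoint C * C) = image_mset (\<lambda>z. 1 - z) (ev (mat_adjoint B * B))"
    unfolding CstarC by (rule ev_one_minus[OF BB])
  define \<alpha> where "\<alpha> = image_mset Re (ev (mat_adjoint A * A))"
  define \<beta> where "\<beta> = image_mset Re (ev (mat_adjoint B * B))"
  define \<gamma> where "\<gamma> = image_mset Re (ev (C * mat_adjoint C))"
  define \<eta> where "\<eta> = image_mset Re (ev (A * mat_adjoint A))"
  have r1: "replicate_mset d 0 + \<alpha> = replicate_mset (M - k) 0 + \<eta>"
    using arg_cong[OF e1, of "image_mset Re"] unfolding \<alpha>_def \<eta>_def by simp
  have r2: "\<eta> = image_mset (\<lambda>x. 1 - x) \<gamma>"
    unfolding \<eta>_def \<gamma>_def e2 by (simp add: multiset.map_comp o_def)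
  have r3: "replicate_mset k 0 + \<gamma> = replicate_mset d 0 + image_mset (\<lambda>x. 1 - x) \<beta>"
    using arg_cong[OF e3, of "image_mset Re"] unfolding \<beta>_def \<gamma>_def e4 by (simp add: multiset.map_comp o_def)
  have nb: "\<forall>x\<in>#\<beta>. x \<ge> 0" unfolding \<beta>_def by (rule gram_re[OF B])
  have ng: "\<forall>x\<in>#\<gamma>. x \<ge> 0" unfolding \<gamma>_def using gram_re[OF aC] unfolding adj_adj .
  have ne: "\<forall>x\<in>#\<eta>. x \<ge> 0" unfolding \<eta>_def using gram_re[OF aA] unfolding adj_adj .
  note RP = real_part[OF r1 r2 r3 nb ng ne kN Md]
  have sizeb: "size \<beta> = k" unfolding \<beta>_def using ev_size[OF BB] by simp
  have sizee: "size \<eta> = d" unfolding \<eta>_def using ev_size[OF AA] by simp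
  have svA: "singular_values A = take d (rs (image_mset sqrt \<alpha>))"
  proof -
    have "min (dim_row A) (dim_col A) = d" using A kN Md by auto
    thus ?thesis unfolding sv_rs \<alpha>_def by simp
  qed
  have svB: "singular_values B = rs (image_mset sqrt \<beta>)"
  proof -
    have "min (dim_row B) (dim_col B) = k" using B kN by auto
    hence "singular_values B = take k (rs (image_mset sqrt \<beta>))" unfolding sv_rs \<beta>_def by simp
    also have "\<dots> = rs (image_mset sqrt \<beta>)" using rs_length[of "image_mset sqrt \<beta>"] sizeb by simp
    finally show ?thesis .
  qed
  have lb: "length (rs (image_mset sqrt \<beta>)) = k" using rs_length sizeb by simp
  have le: "length (rs (image_mset sqrt \<eta>)) = d" using rs_length sizee by simp
  show ?thesis unfolding d_def[symmetric] Kc_def[symmetric] A_def[symmetric] B_def[symmetric]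
  proof (intro conjI impI ballI)
    fix i assume kd: "k \<le> d" and i: "i \<in> {1..d - k}"
    have "singular_values A = replicate (d - k) 1 @ rs (image_mset sqrt \<beta>)"
      unfolding svA using RP kd lb by simp
    moreover have "i - 1 < d - k" using i by auto
    ultimately show "sigma A i = 1" unfolding sigma_def by (simp add: nth_append)
  next
    fix j assume kd: "k \<le> d" and j: "j \<in> {1..k}"
    have "singular_values A = replicate (d - k) 1 @ rs (image_mset sqrt \<beta>)"
      unfolding svA using RP kd lb by simp
    moreover have "d - k + j - 1 = (d - k) + (j - 1)" using j kd by auto
    ultimately show "sigma A (d - k + j) = sigma B j" unfolding sigma_def svB by (simp add: nth_append)
  next
    fix i assume dk: "d < k" and i: "i \<in> {1..k - d}"
    have "i - 1 < k - d" using i by auto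
    thus "sigma B i = 1" unfolding sigma_def svB using RP dk by (simp add: nth_append)
  next
    fix i assume dk: "d < k" and i: "i \<in> {1..d}"
    have sa: "singular_values A = rs (image_mset sqrt \<eta>)" unfolding svA using RP dk le by simp
    have sb: "singular_values B = replicate (k - d) 1 @ rs (image_mset sqrt \<eta>)" unfolding svB using RP dk by simp
    have "i + k - d - 1 = (k - d) + (i - 1)" using dk i by auto
    thus "sigma A i = sigma B (i + k - d)" unfolding sigma_def sa sb by (simp add: nth_append)
  qed
qed

end
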